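(* Let $S=(P,L)$ be a $(2,2)$-generalized quadrangle and let $(R,\psi)$ be a faithful representation of $S$ with $\psi(x)=\langle r_x\rangle$. Then $|R|=2^4$ if and only if $r_ar_br_c=1$ for every complete $3$-arc $\{a,b,c\}$ of $S$.
   Context: A $(2,t)$-generalized quadrangle is a partial linear space in which every line has exactly $3$ points, every point lies on exactly $t+1$ lines, no point is collinear with all points, and for every point $x$ and line $\ell$ with $x\notin\ell$, $x$ is collinear with exactly one point of $\ell$. A $k$-arc is a set of $k$ pairwise non-collinear points; it is complete if it is not contained in a $(k+1)$-arc. A representation $(R,\psi)$ of $S$ is a group $R$ with a map $\psi$ assigning to each point $x$ a subgroup $\psi(x)=\langle r_x\rangle$ of order $2$, such that $R$ is generated by the $r_x$ and, for every line $\{x,y,z\}$, $\{1,r_x,r_y,r_z\}$ is a Klein four subgroup. It is faithful if $\psi$ is injective. *)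

theory Defs
  imports "HOL-Algebra.Algebra"
begin

definition collinear :: "'p set set \<Rightarrow> 'p \<Rightarrow> 'p \<Rightarrow> bool" where
  "collinear L x y \<longleftrightarrow> (\<exists>l\<in>L. x \<in> l \<and> y \<in> l)"

definition partial_linear_space :: "'p set \<Rightarrow> 'p set set \<Rightarrow> bool" where
  "partial_linear_space P L \<longleftrightarrow>
     (\<forall>l\<in>L. l \<subseteq> P \<and> card l \<ge> 2) \<and>
     (\<forall>x\<in>P. \<forall>y\<in>P. x \<noteq> y \<longrightarrow> (\<forall>l\<in>L. \<forall>m\<in>L. x \<in> l \<and> y \<in> l \<and> x \<in> m \<and> y \<in> m \<longrightarrow> l = m))"

definition GQ2 :: "nat \<Rightarrow> 'p set \<Rightarrow> 'p set set \<Rightarrow> bool" where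
  "GQ2 t P L \<longleftrightarrow>
     P \<noteq> {} \<and>
     partial_linear_space P L \<and>
     (\<forall>l\<in>L. finite l \<and> card l = 3) \<and>
     (\<forall>x\<in>P. finite {l\<in>L. x \<in> l} \<and> card {l\<in>L. x \<in> l} = t + 1) \<and>
     (\<forall>x\<in>P. \<not> (\<forall>y\<in>P. collinear L x y)) \<and>
     (\<forall>x\<in>P. \<forall>l\<in>L. x \<notin> l \<longrightarrow> (\<exists>!y. y \<in> l \<and> collinear L x y))"

definition is_arc :: "'p set \<Rightarrow> 'p set set \<Rightarrow> 'p set \<Rightarrow> bool" where
  "is_arc P L A \<longleftrightarrow> A \<subseteq> P \<and> (\<forall>x\<in>A. \<forall>y\<in>A. x \<noteq> y \<longrightarrow> \<not> collinear L x y)"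

definition is_k_arc :: "'p set \<Rightarrow> 'p set set \<Rightarrow> nat \<Rightarrow> 'p set \<Rightarrow> bool" where
  "is_k_arc P L k A \<longleftrightarrow> is_arc P L A \<and> finite A \<and> card A = k"

definition complete_k_arc :: "'p set \<Rightarrow> 'p set set \<Rightarrow> nat \<Rightarrow> 'p set \<Rightarrow> bool" where
  "complete_k_arc P L k A \<longleftrightarrow> is_k_arc P L k A \<and>
     \<not> (\<exists>B. A \<subseteq> B \<and> is_k_arc P L (k + 1) B)"

definition klein_four_subgroup :: "('a, 'b) monoid_scheme \<Rightarrow> 'a set \<Rightarrow> bool" where
  "klein_four_subgroup R H \<longleftrightarrow> subgroup H R \<and> finite H \<and> card H = 4 \<and>
     (\<forall>h\<in>H. h \<otimes>\<^bsub>R\<^esub> h = \<one>\<^bsub>R\<^esub>)"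

(* representation (R, psi) with psi x = <r x>, r x of order 2 *)
definition representation ::
  "'p set \<Rightarrow> 'p set set \<Rightarrow> ('a, 'b) monoid_scheme \<Rightarrow> ('p \<Rightarrow> 'a) \<Rightarrow> bool" where
  "representation P L R r \<longleftrightarrow> group R \<and>
     (\<forall>x\<in>P. r x \<in> carrier R \<and> r x \<noteq> \<one>\<^bsub>R\<^esub> \<and> r x \<otimes>\<^bsub>R\<^esub> r x = \<one>\<^bsub>R\<^esub>) \<and>
     generate R (r ` P) = carrier R \<and>
     (\<forall>l\<in>L. \<forall>x y z. l = {x, y, z} \<longrightarrow>
        klein_four_subgroup R {\<one>\<^bsub>R\<^esub>, r x, r y, r z})"

definition faithful_representation ::
  "'p set \<Rightarrow> 'p set set \<Rightarrow> ('a, 'b) monoid_scheme \<Rightarrow> ('p \<Rightarrow> 'a) \<Rightarrow> bool" where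
  "faithful_representation P L R r \<longleftrightarrow> representation P L R r \<and>
     inj_on (\<lambda>x. generate R {r x}) P"

end

theory Submission
  imports Defs
begin

locale gq =
  fixes P :: "'p set" and L :: "'p set set"
  assumes gq: "GQ2 2 P L"
begin

abbreviation coll where "coll \<equiv> collinear L"

lemma gqD: "P \<noteq> {}" "partial_linear_space P L" "\<forall>l\<in>L. finite l \<and> card l = 3"
  "\<forall>x\<in>P. finite {l\<in>L. x \<in> l} \<and> card {l\<in>L. x \<in> l} = 3"
  "\<forall>x\<in>P. \<not> (\<forall>y\<in>P. collinear L x y)"
  "\<forall>x\<in>P. \<forall>l\<in>L. x \<notin> l \<longrightarrow> (\<exists>!y. y \<in> l \<and> collinear L x y)"
  using gq unfolding GQ2_def by simp_all

lemma plsD: "\<forall>l\<in>L. l \<subseteq> P \<and> card l \<ge> 2"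
  "\<forall>x\<in>P. \<forall>y\<in>P. x \<noteq> y \<longrightarrow> (\<forall>l\<in>L. \<forall>m\<in>L. x \<in> l \<and> y \<in> l \<and> x \<in> m \<and> y \<in> m \<longrightarrow> l = m)"
  using gqD(2) unfolding partial_linear_space_def by simp_all

lemma line_sub: "l \<in> L \<Longrightarrow> l \<subseteq> P"
  using plsD(1) by simp

lemma line_card: "l \<in> L \<Longrightarrow> finite l \<and> card l = 3"
  using gqD(3) by simp

lemma line_uniq: "l \<in> L \<Longrightarrow> m \<in> L \<Longrightarrow> x \<in> l \<Longrightarrow> y \<in> l \<Longrightarrow> x \<in> m \<Longrightarrow> y \<in> m \<Longrightarrow> x \<noteq> y \<Longrightarrow> l = m"
proof -
  assume a: "l \<in> L" "m \<in> L" "x \<in> l" "y \<in> l" "x \<in> m" "y \<in> m" "x \<noteq> y"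
  have "x \<in> P" "y \<in> P" using a line_sub by auto
  then show ?thesis using plsD(2) a by simp
qed

lemma pt_lines: "x \<in> P \<Longrightarrow> card {l\<in>L. x \<in> l} = 3"
  using gqD(4) by simp

lemma gq_ax: "x \<in> P \<Longrightarrow> l \<in> L \<Longrightarrow> x \<notin> l \<Longrightarrow> \<exists>!y. y \<in> l \<and> coll x y"
  using gqD(6) by simp

lemma nonfull: "x \<in> P \<Longrightarrow> \<exists>y\<in>P. \<not> coll x y"
  using gqD(5) by simp

lemma Pne: "P \<noteq> {}"
  using gqD(1) .

lemma coll_I: "l \<in> L \<Longrightarrow> x \<in> l \<Longrightarrow> y \<in> l \<Longrightarrow> coll x y"
  unfolding collinear_def by blast

lemma coll_sym: "coll x y \<Longrightarrow> coll y x"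
  unfolding collinear_def by blast

lemma coll_P: "coll x y \<Longrightarrow> x \<in> P \<and> y \<in> P"
  unfolding collinear_def using line_sub by (meson subsetD)

lemma coll_E: "coll x y \<Longrightarrow> (\<And>l. l \<in> L \<Longrightarrow> x \<in> l \<Longrightarrow> y \<in> l \<Longrightarrow> thesis) \<Longrightarrow> thesis"
  unfolding collinear_def by blast

lemma lines_at: "x \<in> P \<Longrightarrow> \<exists>l1 l2 l3. {l\<in>L. x \<in> l} = {l1,l2,l3} \<and> l1 \<noteq> l2 \<and> l2 \<noteq> l3 \<and> l1 \<noteq> l3"
  using pt_lines[of x] by (simp add: card_3_iff)

lemma coll_refl: "x \<in> P \<Longrightarrow> coll x x"
proof -
  assume "x \<in> P"
  then obtain l1 l2 l3 where k: "{l\<in>L. x \<in> l} = {l1,l2,l3}" using lines_at[OF \<open>x \<in> P\<close>] by (elim exE conjE) (rule that)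
  have "l1 \<in> {l\<in>L. x \<in> l}" unfolding k by simp
  then show ?thesis using coll_I[of l1 x x] by simp
qed

lemma three_lines:
  assumes "x \<in> P" "l1 \<in> L" "l2 \<in> L" "l3 \<in> L" "x \<in> l1" "x \<in> l2" "x \<in> l3"
    "l1 \<noteq> l2" "l2 \<noteq> l3" "l1 \<noteq> l3" "l \<in> L" "x \<in> l"
  shows "l = l1 \<or> l = l2 \<or> l = l3"
proof -
  obtain k1 k2 k3 where k: "{l\<in>L. x \<in> l} = {k1,k2,k3}" using lines_at[OF assms(1)] by (elim exE conjE) (rule that)
  have "{l1,l2,l3} \<subseteq> {l\<in>L. x \<in> l}" using assms by simp
  then have "{l1,l2,l3} \<subseteq> {k1,k2,k3}" unfolding k .
  moreover have "card {l1,l2,l3} = 3" using assms by simp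
  moreover have "card {k1,k2,k3} \<le> 3" by (simp add: card_insert_le_m1)
  ultimately have "{l1,l2,l3} = {k1,k2,k3}"
    using card_seteq[of "{k1,k2,k3}" "{l1,l2,l3}"] by simp
  moreover have "l \<in> {l\<in>L. x \<in> l}" using assms by simp
  ultimately have "l \<in> {l1,l2,l3}" using k by simp
  then show ?thesis by simp
qed

lemma gq_ex: "x \<in> P \<Longrightarrow> l \<in> L \<Longrightarrow> x \<notin> l \<Longrightarrow> \<exists>y\<in>l. coll x y"
  using gq_ax by blast

lemma gq_un: "x \<in> P \<Longrightarrow> l \<in> L \<Longrightarrow> x \<notin> l \<Longrightarrow> y \<in> l \<Longrightarrow> z \<in> l \<Longrightarrow> coll x y \<Longrightarrow> coll x z \<Longrightarrow> y = z"
  using gq_ax by blast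

lemma NT: "l \<in> L \<Longrightarrow> x \<in> l \<Longrightarrow> y \<in> l \<Longrightarrow> x \<noteq> y \<Longrightarrow> coll z x \<Longrightarrow> coll z y \<Longrightarrow> z \<in> l"
  using gq_un coll_P by blast

lemma line_third: "l \<in> L \<Longrightarrow> x \<in> l \<Longrightarrow> y \<in> l \<Longrightarrow> x \<noteq> y \<Longrightarrow> \<exists>z. l = {x,y,z} \<and> z \<noteq> x \<and> z \<noteq> y"
proof -
  assume a: "l \<in> L" "x \<in> l" "y \<in> l" "x \<noteq> y"
  then have c: "card l = 3" "finite l" using line_card by auto
  have "card (l - {x,y}) = 1" using c a by (simp add: card_Diff_subset)
  then obtain z where "l - {x,y} = {z}" by (auto simp: card_Suc_eq)
  then show ?thesis using a by (intro exI[of _ z]) blast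
qed

lemma line_eq3: "l \<in> L \<Longrightarrow> x \<in> l \<Longrightarrow> y \<in> l \<Longrightarrow> z \<in> l \<Longrightarrow> x \<noteq> y \<Longrightarrow> y \<noteq> z \<Longrightarrow> x \<noteq> z \<Longrightarrow> l = {x,y,z}"
proof -
  assume a: "l \<in> L" "x \<in> l" "y \<in> l" "z \<in> l" "x \<noteq> y" "y \<noteq> z" "x \<noteq> z"
  then have c: "card l = 3" "finite l" using line_card by auto
  have "{x,y,z} \<subseteq> l" using a by blast
  moreover have "card {x,y,z} = 3" using a by simp
  ultimately show ?thesis using c card_seteq[OF c(2), of "{x,y,z}"] by simp
qed

definition D where "D a b e f g \<longleftrightarrow> {a,e,f} \<in> L \<and> {b,e,g} \<in> L \<and> a \<noteq> e \<and> a \<noteq> f \<and> e \<noteq> f \<and>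
   b \<noteq> e \<and> b \<noteq> g \<and> e \<noteq> g \<and> \<not> coll b f \<and> \<not> coll a g"

lemma line_data:
  assumes "a \<in> P" "b \<in> P" "\<not> coll a b" "l \<in> L" "a \<in> l"
  shows "\<exists>e f g. l = {a,e,f} \<and> D a b e f g"
proof -
  have bl: "b \<notin> l" using assms coll_I[OF assms(4,5), of b] by blast
  obtain e where e: "e \<in> l" "coll b e" using gq_ex[OF assms(2,4) bl] by blast
  have ae: "a \<noteq> e" using e assms coll_sym by blast
  obtain f where f: "l = {a,e,f}" "f \<noteq> a" "f \<noteq> e" using line_third[OF assms(4,5) e(1) ae] by blast
  have be: "b \<noteq> e" using bl e by blast
  obtain m where m: "m \<in> L" "b \<in> m" "e \<in> m" using e(2) by (rule coll_E)
  obtain g where g: "m = {b,e,g}" "g \<noteq> b" "g \<noteq> e" using line_third[OF m be] by blast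
  have nbf: "\<not> coll b f" using gq_un[OF assms(2,4) bl, of e f] e f by blast
  have am: "a \<notin> m" using m assms coll_I[OF m(1) _ m(2), of a] by blast
  have cae: "coll a e" using coll_I[OF assms(4,5) e(1)] .
  have nag: "\<not> coll a g" using gq_un[OF assms(1) m(1) am, of e g] g m cae by blast
  show ?thesis unfolding D_def
    apply (rule exI[of _ e], rule exI[of _ f], rule exI[of _ g])
    using f g m assms ae be nbf nag by auto
qed

lemma D_facts:
  assumes "D a b e f g" "\<not> coll a b"
  shows "coll a e" "coll a f" "coll e f" "coll b e" "coll b g" "coll e g"
    "coll e a" "coll f a" "coll f e" "coll e b" "coll g b" "coll g e"
    "e \<in> P" "f \<in> P" "g \<in> P" "\<not> coll f g" "\<not> coll g f" "\<not> coll f b" "\<not> coll g a"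
proof -
  have l: "{a,e,f} \<in> L" and m: "{b,e,g} \<in> L" using assms unfolding D_def by auto
  show "coll a e" "coll a f" "coll e f" "coll b e" "coll b g" "coll e g"
    "coll e a" "coll f a" "coll f e" "coll e b" "coll g b" "coll g e"
    using coll_I[OF l] coll_I[OF m] by auto
  show "e \<in> P" "f \<in> P" "g \<in> P" using line_sub[OF l] line_sub[OF m] by auto
  show "\<not> coll g a" "\<not> coll f b" using assms coll_sym unfolding D_def by blast+
  show nfg: "\<not> coll f g"
  proof
    assume "coll f g"
    moreover have "coll g e" using coll_I[OF m] by auto
    ultimately have "g \<in> {a,e,f}" using NT[OF l, of e f g] assms coll_sym unfolding D_def by auto
    then show False using assms coll_I[OF m] coll_I[OF l] coll_sym unfolding D_def by auto
  qed
  then show "\<not> coll g f" using coll_sym by blast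
qed

lemma pair:
  assumes ab: "a \<in> P" "b \<in> P" "\<not> coll a b" and D1: "D a b e f g" and D2: "D a b e' f' g'"
    and ne: "{a,e,f} \<noteq> {a,e',f'}"
  shows "\<not> coll e e'" "\<not> coll f f'" "\<not> coll e f'" "\<not> coll f e'" "\<not> coll e g'" "\<not> coll g e'"
    "\<not> coll g g'" "coll f g'" "{b,e,g} \<noteq> {b,e',g'}" "e \<noteq> e'" "f \<noteq> f'" "g \<noteq> g'"
proof -
  note F1 = D_facts[OF D1 ab(3)] and F2 = D_facts[OF D2 ab(3)]
  have l: "{a,e,f} \<in> L" and m: "{b,e,g} \<in> L" using D1 unfolding D_def by auto
  have l': "{a,e',f'} \<in> L" and m': "{b,e',g'} \<in> L" using D2 unfolding D_def by auto
  have A: "\<not> coll y x" if "y \<in> {e,f}" "x \<in> {e',f'}" for x y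
  proof
    assume c: "coll y x"
    have "coll x a" "coll x y" using that F1 F2 c coll_sym by auto
    then have "x \<in> {a,e,f}" using NT[OF l, of a y x] that D1 unfolding D_def by auto
    then have "{a,e,f} = {a,e',f'}"
      using line_uniq[OF l l', of a x] that D2 unfolding D_def by auto
    then show False using ne by blast
  qed
  then show "\<not> coll e e'" "\<not> coll f f'" "\<not> coll e f'" "\<not> coll f e'" by auto
  show "e \<noteq> e'" "f \<noteq> f'" using A F1 coll_refl by blast+
  show mne: "{b,e,g} \<noteq> {b,e',g'}"
  proof
    assume "{b,e,g} = {b,e',g'}"
    then have "e' \<in> {b,e,g}" by blast
    then show False using F1 F2 ab A[of e e'] coll_refl by auto
  qed
  have B: "\<not> coll y x" if "y \<in> {e,g}" "x \<in> {e',g'}" for x y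
  proof
    assume c: "coll y x"
    have "coll x b" "coll x y" using that F1 F2 c coll_sym by auto
    then have "x \<in> {b,e,g}" using NT[OF m, of b y x] that D1 unfolding D_def by auto
    then have "{b,e,g} = {b,e',g'}"
      using line_uniq[OF m m', of b x] that D2 unfolding D_def by auto
    then show False using mne by blast
  qed
  then show "\<not> coll e g'" "\<not> coll g e'" "\<not> coll g g'" by auto
  show "g \<noteq> g'" using B F1 coll_refl by blast
  have fm: "f \<notin> {b,e',g'}" using F1 F2 A[of f e'] coll_refl by auto
  obtain y where y: "y \<in> {b,e',g'}" "coll f y" using gq_ex[OF F1(14) m' fm] by blast
  then show "coll f g'" using F1 A[of f e'] by auto
qed

lemma cross:
  assumes ab: "a \<in> P" "b \<in> P" "\<not> coll a b" and D1: "D a b e f g" and D2: "D a b e' f' g'"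
    and ne: "{a,e,f} \<noteq> {a,e',f'}"
  shows "\<exists>p. {f,g',p} \<in> L \<and> p \<noteq> f \<and> p \<noteq> g' \<and> f \<noteq> g' \<and> coll f' p \<and> coll g p \<and>
     \<not> coll a p \<and> \<not> coll b p \<and> \<not> coll e p \<and> \<not> coll e' p \<and> p \<in> P"
proof -
  note F1 = D_facts[OF D1 ab(3)] and F2 = D_facts[OF D2 ab(3)]
  note P12 = pair[OF ab D1 D2 ne] and P21 = pair[OF ab D2 D1 ne[symmetric]]
  have l: "{a,e,f} \<in> L" and m: "{b,e,g} \<in> L" using D1 unfolding D_def by auto
  have l': "{a,e',f'} \<in> L" and m': "{b,e',g'} \<in> L" using D2 unfolding D_def by auto
  have fg: "f \<noteq> g'" using F1 F2 by blast
  obtain n where n: "n \<in> L" "f \<in> n" "g' \<in> n" using P12(8) by (rule coll_E)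
  obtain p where p: "n = {f,g',p}" "p \<noteq> f" "p \<noteq> g'" using line_third[OF n fg] by blast
  have pP: "p \<in> P" using line_sub[OF n(1)] p by blast
  have cfp: "coll f p" "coll g' p" using coll_I[OF n(1)] p by auto
  have an: "a \<notin> n" using coll_I[OF n(1)] n F2 by blast
  have nap: "\<not> coll a p" using gq_un[OF ab(1) n(1) an, of f p] p n F1 by auto
  have bn: "b \<notin> n" using coll_I[OF n(1)] n F1 by blast
  have nbp: "\<not> coll b p" using gq_un[OF ab(2) n(1) bn, of g' p] p n F2 by auto
  have f'n: "f' \<notin> n" using coll_I[OF n(1)] n P12(2) by blast
  obtain y where y: "y \<in> n" "coll f' y" using gq_ex[OF F2(14) n(1) f'n] by blast
  have cf'p: "coll f' p" using y p P12(2) coll_sym F2(16) by auto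
  have gn: "g \<notin> n" using coll_I[OF n(1)] n P12(7) by blast
  obtain z where z: "z \<in> n" "coll g z" using gq_ex[OF F1(15) n(1) gn] by blast
  have cgp: "coll g p" using z p P12(7) coll_sym F1(17) by auto
  have pl: "p \<notin> {a,e,f}" using nap coll_I[OF l] by auto
  have nep: "\<not> coll e p" using gq_un[OF pP l pl, of f e] cfp coll_sym D1 unfolding D_def by auto
  have pl': "p \<notin> {a,e',f'}" using nap coll_I[OF l'] by auto
  have ne'p: "\<not> coll e' p" using gq_un[OF pP l' pl', of f' e'] cf'p coll_sym D2 unfolding D_def by auto
  show ?thesis using p n fg cf'p cgp nap nbp nep ne'p pP by blast
qed

lemma neq1: "coll z x \<Longrightarrow> \<not> coll z y \<Longrightarrow> x \<noteq> y" by blast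
lemma neq2: "coll x z \<Longrightarrow> \<not> coll z y \<Longrightarrow> x \<noteq> y" using coll_sym by blast
lemma neq3: "coll z x \<Longrightarrow> \<not> coll y z \<Longrightarrow> x \<noteq> y" using coll_sym by blast
lemma neq4: "coll x z \<Longrightarrow> \<not> coll y z \<Longrightarrow> x \<noteq> y" by blast

lemma cross3:
  assumes ab: "a \<in> P" "b \<in> P" "\<not> coll a b" and D1: "D a b e1 f1 g1" and D2: "D a b e2 f2 g2"
    and D3: "D a b e3 f3 g3"
    and ne13: "{a,e1,f1} \<noteq> {a,e3,f3}" and ne32: "{a,e3,f3} \<noteq> {a,e2,f2}"
    and n: "{f1,g2,p} \<in> L" "p \<noteq> g2" "\<not> coll a p" "p \<in> P"
  shows "coll e3 p"
proof -
  note F1 = D_facts[OF D1 ab(3)] and F2 = D_facts[OF D2 ab(3)] and F3 = D_facts[OF D3 ab(3)]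
  have l3: "{a,e3,f3} \<in> L" using D3 unfolding D_def by auto
  have pl: "p \<notin> {a,e3,f3}" using n(3) coll_I[OF l3, of a p] by auto
  obtain y where y: "y \<in> {a,e3,f3}" "coll p y" using gq_ex[OF n(4) l3 pl] by blast
  have "y \<noteq> a" using y n(3) coll_sym by blast
  moreover have "y \<noteq> f3"
  proof
    assume yf: "y = f3"
    have c32: "coll f3 g2" using pair(8)[OF ab D3 D2 ne32] .
    obtain k where k: "k \<in> L" "f3 \<in> k" "g2 \<in> k" using c32 by (rule coll_E)
    have f3g2: "f3 \<noteq> g2" using F3(2) F2(19) coll_sym by blast
    have pg2: "coll p g2" using coll_I[OF n(1), of p g2] by simp
    have "p \<in> k" using NT[OF k f3g2, of p] y yf pg2 by simp
    then have "k = {f1,g2,p}" using line_uniq[OF k(1) n(1), of g2 p] k n(2) by simp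
    then have "coll f1 f3" using coll_I[OF n(1), of f1 f3] k by simp
    then show False using pair(2)[OF ab D1 D3 ne13] by simp
  qed
  ultimately have "y = e3" using y by blast
  then show ?thesis using y coll_sym by blast
qed

lemma gstruct:
  assumes ab: "a \<in> P" "b \<in> P" "\<not> coll a b"
  shows "\<exists>e1 e2 e3 f1 f2 f3 g1 g2 g3 p12 p13 p23 c.
    (\<forall>x\<in>P. x \<in> {a,b,e1,e2,e3,f1,f2,f3,g1,g2,g3,p12,p13,p23,c}) \<and>
    distinct [a,b,e1,e2,e3,f1,f2,f3,g1,g2,g3,p12,p13,p23,c] \<and>
    {a,b,e1,e2,e3,f1,f2,f3,g1,g2,g3,p12,p13,p23,c} \<subseteq> P \<and>
    {a,e1,f1} \<in> L \<and> {a,e2,f2} \<in> L \<and> {a,e3,f3} \<in> L \<and>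
    {b,e1,g1} \<in> L \<and> {b,e2,g2} \<in> L \<and> {b,e3,g3} \<in> L \<and>
    {f1,g2,p12} \<in> L \<and> {f1,g3,p13} \<in> L \<and> {f2,g3,p23} \<in> L \<and>
    coll c p12 \<and> coll c p13 \<and> coll c p23 \<and>
    \<not> coll a p12 \<and> \<not> coll a p13 \<and> \<not> coll a p23 \<and> \<not> coll a c \<and>
    \<not> coll b p12 \<and> \<not> coll b p13 \<and> \<not> coll b p23 \<and> \<not> coll b c \<and>
    \<not> coll p12 p13 \<and> \<not> coll p12 p23 \<and> \<not> coll p13 p23 \<and> c \<in> P \<and>
    coll a e1 \<and> coll a e2 \<and> coll a e3 \<and> coll a f1 \<and> coll a f2 \<and> coll a f3 \<and>
    coll b g1 \<and> coll b g2 \<and> coll b g3"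
proof -
  obtain l1 l2 l3 where ls: "{l\<in>L. a \<in> l} = {l1,l2,l3}" "l1 \<noteq> l2" "l2 \<noteq> l3" "l1 \<noteq> l3"
    using lines_at[OF ab(1)] by (elim exE conjE) (rule that)
  have l1: "l1 \<in> L" "a \<in> l1" and l2: "l2 \<in> L" "a \<in> l2" and l3: "l3 \<in> L" "a \<in> l3"
  proof -
    have "l1 \<in> {l\<in>L. a \<in> l}" "l2 \<in> {l\<in>L. a \<in> l}" "l3 \<in> {l\<in>L. a \<in> l}" unfolding ls(1) by simp_all
    then show "l1 \<in> L" "a \<in> l1" "l2 \<in> L" "a \<in> l2" "l3 \<in> L" "a \<in> l3" by simp_all
  qed
  obtain e1 f1 g1 where d1: "l1 = {a,e1,f1}" "D a b e1 f1 g1" using line_data[OF ab l1] by blast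
  obtain e2 f2 g2 where d2: "l2 = {a,e2,f2}" "D a b e2 f2 g2" using line_data[OF ab l2] by blast
  obtain e3 f3 g3 where d3: "l3 = {a,e3,f3}" "D a b e3 f3 g3" using line_data[OF ab l3] by blast
  have n12: "{a,e1,f1} \<noteq> {a,e2,f2}" and n13: "{a,e1,f1} \<noteq> {a,e3,f3}" and n23: "{a,e2,f2} \<noteq> {a,e3,f3}"
    using ls d1 d2 d3 by auto
  note n21 = n12[symmetric] and n31 = n13[symmetric] and n32 = n23[symmetric]
  note F1 = D_facts[OF d1(2) ab(3)] and F2 = D_facts[OF d2(2) ab(3)] and F3 = D_facts[OF d3(2) ab(3)]
  note P12 = pair[OF ab d1(2) d2(2) n12] and P21 = pair[OF ab d2(2) d1(2) n21]
  note P13 = pair[OF ab d1(2) d3(2) n13] and P31 = pair[OF ab d3(2) d1(2) n31]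
  note P23 = pair[OF ab d2(2) d3(2) n23] and P32 = pair[OF ab d3(2) d2(2) n32]
  have L1: "{a,e1,f1} \<in> L" "{b,e1,g1} \<in> L" using d1 unfolding D_def by auto
  have L2: "{a,e2,f2} \<in> L" "{b,e2,g2} \<in> L" using d2 unfolding D_def by auto
  have L3: "{a,e3,f3} \<in> L" "{b,e3,g3} \<in> L" using d3 unfolding D_def by auto
  have dd: "a \<noteq> e1" "a \<noteq> f1" "e1 \<noteq> f1" "b \<noteq> e1" "b \<noteq> g1" "e1 \<noteq> g1"
     "a \<noteq> e2" "a \<noteq> f2" "e2 \<noteq> f2" "b \<noteq> e2" "b \<noteq> g2" "e2 \<noteq> g2"
     "a \<noteq> e3" "a \<noteq> f3" "e3 \<noteq> f3" "b \<noteq> e3" "b \<noteq> g3" "e3 \<noteq> g3"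
    using d1 d2 d3 unfolding D_def by auto
  obtain p12 where p12: "{f1,g2,p12} \<in> L" "p12 \<noteq> f1" "p12 \<noteq> g2" "f1 \<noteq> g2" "coll f2 p12" "coll g1 p12"
     "\<not> coll a p12" "\<not> coll b p12" "\<not> coll e1 p12" "\<not> coll e2 p12" "p12 \<in> P"
    using cross[OF ab d1(2) d2(2) n12] by blast
  obtain p13 where p13: "{f1,g3,p13} \<in> L" "p13 \<noteq> f1" "p13 \<noteq> g3" "f1 \<noteq> g3" "coll f3 p13" "coll g1 p13"
     "\<not> coll a p13" "\<not> coll b p13" "\<not> coll e1 p13" "\<not> coll e3 p13" "p13 \<in> P"
    using cross[OF ab d1(2) d3(2) n13] by blast
  obtain p23 where p23: "{f2,g3,p23} \<in> L" "p23 \<noteq> f2" "p23 \<noteq> g3" "f2 \<noteq> g3" "coll f3 p23" "coll g2 p23"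
     "\<not> coll a p23" "\<not> coll b p23" "\<not> coll e2 p23" "\<not> coll e3 p23" "p23 \<in> P"
    using cross[OF ab d2(2) d3(2) n23] by blast
  have e3p12: "coll e3 p12" using cross3[OF ab d1(2) d2(2) d3(2) n13 n32 p12(1) p12(3) p12(7) p12(11)] .
  have e2p13: "coll e2 p13" using cross3[OF ab d1(2) d3(2) d2(2) n12 n23 p13(1) p13(3) p13(7) p13(11)] .
  have e1p23: "coll e1 p23" using cross3[OF ab d2(2) d3(2) d1(2) n21 n13 p23(1) p23(3) p23(7) p23(11)] .
  have e1ne: "e1 \<noteq> p23" using p23(7) F1(1) by blast
  obtain q1 where q1: "q1 \<in> L" "e1 \<in> q1" "p23 \<in> q1" using e1p23 by (rule coll_E)
  obtain c where c: "q1 = {e1,p23,c}" "c \<noteq> e1" "c \<noteq> p23" using line_third[OF q1 e1ne] by blast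
  have cP: "c \<in> P" using line_sub[OF q1(1)] c by blast
  have ce2: "coll c e2"
  proof -
    have "e2 \<notin> q1" using c coll_I[OF q1(1), of e1 e2] coll_I[OF q1(1), of e2 p23] P12(1) p23(9) q1 by auto
    then obtain y where y: "y \<in> q1" "coll e2 y" using gq_ex[OF F2(13) q1(1)] by blast
    then show ?thesis using c P21(1) p23(9) coll_sym by auto
  qed
  have ce3: "coll c e3"
  proof -
    have "e3 \<notin> q1" using c coll_I[OF q1(1), of e1 e3] coll_I[OF q1(1), of e3 p23] P13(1) p23(10) q1 by auto
    then obtain y where y: "y \<in> q1" "coll e3 y" using gq_ex[OF F3(13) q1(1)] by blast
    then show ?thesis using c P31(1) p23(10) coll_sym by auto
  qed
  have nac: "\<not> coll a c"
  proof -
    have "a \<notin> q1"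
    proof
      assume "a \<in> q1"
      then have "q1 = {a,e1,f1}" using line_uniq[OF q1(1) L1(1), of a e1] q1 dd by simp
      then show False using q1 coll_I[OF L1(1), of a p23] p23(7) by simp
    qed
    then show ?thesis using gq_un[OF ab(1) q1(1), of e1 c] q1 c F1(1) by auto
  qed
  have nbc: "\<not> coll b c"
  proof -
    have "b \<notin> q1"
    proof
      assume "b \<in> q1"
      then have "q1 = {b,e1,g1}" using line_uniq[OF q1(1) L1(2), of b e1] q1 dd by simp
      then show False using q1 coll_I[OF L1(2), of b p23] p23(8) by simp
    qed
    then show ?thesis using gq_un[OF ab(2) q1(1), of e1 c] q1 c F1(4) by auto
  qed
  have ce2ne: "c \<noteq> e2" using nac F2(1) by blast
  obtain q2 where q2: "q2 \<in> L" "e2 \<in> q2" "c \<in> q2" using ce2 by (rule coll_E)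
  obtain k2 where k2: "k2 \<in> L" "e2 \<in> k2" "p13 \<in> k2" using e2p13 by (rule coll_E)
  have "q2 = k2"
  proof -
    have A: "k2 = {a,e2,f2} \<or> k2 = {b,e2,g2} \<or> k2 = q2"
    proof (rule three_lines[OF F2(13) L2(1) L2(2) q2(1)])
      show "{a,e2,f2} \<noteq> {b,e2,g2}" using L2 dd coll_I[OF L2(2), of a b] ab(3) by auto
      show "{b,e2,g2} \<noteq> q2" using q2 coll_I[OF L2(2), of b c] nbc by auto
      show "{a,e2,f2} \<noteq> q2" using q2 coll_I[OF L2(1), of a c] nac by auto
    qed (use q2 k2 in auto)
    have "k2 \<noteq> {a,e2,f2}" using k2 coll_I[OF L2(1), of a p13] p13(7) by auto
    moreover have "k2 \<noteq> {b,e2,g2}" using k2 coll_I[OF L2(2), of b p13] p13(8) by auto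
    ultimately show ?thesis using A by simp
  qed
  then have cp13: "coll c p13" using coll_I[OF k2(1), of c p13] q2 k2 by simp
  have ce3ne: "c \<noteq> e3" using nac F3(1) by blast
  obtain q3 where q3: "q3 \<in> L" "e3 \<in> q3" "c \<in> q3" using ce3 by (rule coll_E)
  obtain k3 where k3: "k3 \<in> L" "e3 \<in> k3" "p12 \<in> k3" using e3p12 by (rule coll_E)
  have "q3 = k3"
  proof -
    have A: "k3 = {a,e3,f3} \<or> k3 = {b,e3,g3} \<or> k3 = q3"
    proof (rule three_lines[OF F3(13) L3(1) L3(2) q3(1)])
      show "{a,e3,f3} \<noteq> {b,e3,g3}" using L3 dd coll_I[OF L3(2), of a b] ab(3) by auto
      show "{b,e3,g3} \<noteq> q3" using q3 coll_I[OF L3(2), of b c] nbc by auto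
      show "{a,e3,f3} \<noteq> q3" using q3 coll_I[OF L3(1), of a c] nac by auto
    qed (use q3 k3 in auto)
    have "k3 \<noteq> {a,e3,f3}" using k3 coll_I[OF L3(1), of a p12] p12(7) by auto
    moreover have "k3 \<noteq> {b,e3,g3}" using k3 coll_I[OF L3(2), of b p12] p12(8) by auto
    ultimately show ?thesis using A by simp
  qed
  then have cp12: "coll c p12" using coll_I[OF k3(1), of c p12] q3 k3 by simp
  have cp23: "coll c p23" using coll_I[OF q1(1), of c p23] c q1 by simp
  have ce1: "coll e1 c" using coll_I[OF q1(1), of e1 c] c q1 by simp
  have cne: "c \<noteq> p12" "c \<noteq> p13" "c \<noteq> p23" using ce1 p12(9) p13(9) c(3) by auto
  have np23p13: "\<not> coll p23 p13"
  proof
    assume h: "coll p23 p13"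
    have "p23 \<in> k2" using NT[OF k2(1) _ k2(3), of c p23] q2 \<open>q2 = k2\<close> cne cp23 h coll_sym by auto
    then have "k2 = q1" using line_uniq[OF k2(1) q1(1), of c p23] q2 \<open>q2 = k2\<close> c q1 by auto
    then have "coll e1 e2" using coll_I[OF q1(1), of e1 e2] q1 k2 by auto
    then show False using P12(1) by simp
  qed
  have np23p12: "\<not> coll p23 p12"
  proof
    assume h: "coll p23 p12"
    have "p23 \<in> k3" using NT[OF k3(1) _ k3(3), of c p23] q3 \<open>q3 = k3\<close> cne cp23 h coll_sym by auto
    then have "k3 = q1" using line_uniq[OF k3(1) q1(1), of c p23] q3 \<open>q3 = k3\<close> c q1 by auto
    then have "coll e1 e3" using coll_I[OF q1(1), of e1 e3] q1 k3 by auto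
    then show False using P13(1) by simp
  qed
  have np13p12: "\<not> coll p13 p12"
  proof
    assume h: "coll p13 p12"
    have "p13 \<in> k3" using NT[OF k3(1) _ k3(3), of c p13] q3 \<open>q3 = k3\<close> cne cp13 h coll_sym by auto
    then have "k3 = k2" using line_uniq[OF k3(1) k2(1), of c p13] q3 \<open>q3 = k3\<close> q2 \<open>q2 = k2\<close> k2 cne by auto
    then have "coll e2 e3" using coll_I[OF k2(1), of e2 e3] k2 k3 by auto
    then show False using P23(1) by simp
  qed
  have nl1m1: "{a,e1,f1} \<noteq> {b,e1,g1}" using coll_I[OF L1(2), of a b] ab(3) by auto
  have nl2m2: "{a,e2,f2} \<noteq> {b,e2,g2}" using coll_I[OF L2(2), of a b] ab(3) by auto
  have nl3m3: "{a,e3,f3} \<noteq> {b,e3,g3}" using coll_I[OF L3(2), of a b] ab(3) by auto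
  have k2eq: "k2 = {e2,p13,c}"
    using line_eq3[OF k2(1) k2(2) k2(3), of c] q2 \<open>q2 = k2\<close> e2p13 p13(7) F2(1) ce2ne cne by auto
  have k3eq: "k3 = {e3,p12,c}"
    using line_eq3[OF k3(1) k3(2) k3(3), of c] q3 \<open>q3 = k3\<close> e3p12 p12(7) F3(1) ce3ne cne by auto
  have enum: "x \<in> {a,b,e1,e2,e3,f1,f2,f3,g1,g2,g3,p12,p13,p23,c}" if xP: "x \<in> P" for x
  proof -
    consider (A) "coll a x" | (B) "coll b x" | (N) "\<not> coll a x" "\<not> coll b x" by blast
    then show ?thesis
    proof cases
      case A
      show ?thesis
      proof (cases "x = a")
        case False
        obtain k where k: "k \<in> L" "a \<in> k" "x \<in> k" using A by (rule coll_E)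
        have "k = {a,e1,f1} \<or> k = {a,e2,f2} \<or> k = {a,e3,f3}"
          by (rule three_lines[OF ab(1) L1(1) L2(1) L3(1)]) (use n12 n23 n13 k in auto)
        then show ?thesis using k by auto
      qed simp
    next
      case B
      show ?thesis
      proof (cases "x = b")
        case False
        obtain k where k: "k \<in> L" "b \<in> k" "x \<in> k" using B by (rule coll_E)
        have "k = {b,e1,g1} \<or> k = {b,e2,g2} \<or> k = {b,e3,g3}"
          by (rule three_lines[OF ab(2) L1(2) L2(2) L3(2)]) (use P12(9) P23(9) P13(9) k in auto)
        then show ?thesis using k by auto
      qed simp
    next
      case N
      have xl: "x \<notin> {a,e1,f1}" "x \<notin> {a,e2,f2}" "x \<notin> {a,e3,f3}"
        using N coll_I[OF L1(1), of a x] coll_I[OF L2(1), of a x] coll_I[OF L3(1), of a x] by auto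
      have xm: "x \<notin> {b,e1,g1}" "x \<notin> {b,e2,g2}" "x \<notin> {b,e3,g3}"
        using N coll_I[OF L1(2), of b x] coll_I[OF L2(2), of b x] coll_I[OF L3(2), of b x] by auto
      show ?thesis
      proof (cases "coll e1 x")
        case True
        obtain k where k: "k \<in> L" "e1 \<in> k" "x \<in> k" using True by (rule coll_E)
        have "k = {a,e1,f1} \<or> k = {b,e1,g1} \<or> k = q1"
        proof (rule three_lines[OF F1(13) L1(1) L1(2) q1(1)])
          show "{b,e1,g1} \<noteq> q1" using q1 coll_I[OF L1(2), of b p23] p23(8) by auto
          show "{a,e1,f1} \<noteq> q1" using q1 coll_I[OF L1(1), of a p23] p23(7) by auto
        qed (use nl1m1 q1 k in auto)
        then have "k = q1" using xl xm k by auto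
        then show ?thesis using k c by auto
      next
        case ne1: False
        show ?thesis
        proof (cases "coll e2 x")
          case True
          obtain k where k: "k \<in> L" "e2 \<in> k" "x \<in> k" using True by (rule coll_E)
          have "k = {a,e2,f2} \<or> k = {b,e2,g2} \<or> k = k2"
          proof (rule three_lines[OF F2(13) L2(1) L2(2) k2(1)])
            show "{b,e2,g2} \<noteq> k2" using k2 coll_I[OF L2(2), of b p13] p13(8) by auto
            show "{a,e2,f2} \<noteq> k2" using k2 coll_I[OF L2(1), of a p13] p13(7) by auto
          qed (use nl2m2 k2 k in auto)
          then have "k = k2" using xl xm k by auto
          then show ?thesis using k k2eq by auto
        next
          case ne2: False
          show ?thesis
          proof (cases "coll e3 x")
            case True
            obtain k where k: "k \<in> L" "e3 \<in> k" "x \<in> k" using True by (rule coll_E)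
            have "k = {a,e3,f3} \<or> k = {b,e3,g3} \<or> k = k3"
            proof (rule three_lines[OF F3(13) L3(1) L3(2) k3(1)])
              show "{b,e3,g3} \<noteq> k3" using k3 coll_I[OF L3(2), of b p12] p12(8) by auto
              show "{a,e3,f3} \<noteq> k3" using k3 coll_I[OF L3(1), of a p12] p12(7) by auto
            qed (use nl3m3 k3 k in auto)
            then have "k = k3" using xl xm k by auto
            then show ?thesis using k k3eq by auto
          next
            case ne3: False
            obtain y where y: "y \<in> {a,e1,f1}" "coll x y" using gq_ex[OF xP L1(1) xl(1)] by blast
            have xf1: "coll x f1" using y N ne1 coll_sym by auto
            obtain z where z: "z \<in> {b,e2,g2}" "coll x z" using gq_ex[OF xP L2(2) xm(2)] by blast
            have xg2: "coll x g2" using z N ne2 coll_sym by auto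
            have "x \<in> {f1,g2,p12}" using NT[OF p12(1) _ _ p12(4) xf1 xg2] by simp
            then have "x = p12" using N F1(2) F2(5) by auto
            then show ?thesis using e3p12 ne3 by simp
          qed
        qed
      qed
    qed
  qed
  have refl: "coll a a" "coll b b" "coll e1 e1" "coll e2 e2" "coll e3 e3" "coll f1 f1" "coll f2 f2" "coll f3 f3"
    "coll g1 g1" "coll g2 g2" "coll g3 g3" "coll p12 p12" "coll p13 p13" "coll p23 p23" "coll c c"
    using coll_refl ab F1 F2 F3 p12 p13 p23 cP by auto
  have symp: "\<not> coll p12 p13" "\<not> coll p12 p23" "\<not> coll p13 p23"
    using np13p12 np23p12 np23p13 coll_sym by blast+
  have dist: "distinct [a,b,e1,e2,e3,f1,f2,f3,g1,g2,g3,p12,p13,p23,c]"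
    using neq1[OF refl(1) ab(3)] neq3[OF F1(4) ab(3), THEN not_sym] neq3[OF F2(4) ab(3), THEN not_sym] neq3[OF F3(4) ab(3), THEN not_sym] neq2[OF F2(1) P21(3)] neq2[OF F1(1) P12(3)] neq2[OF F1(1) P13(3)] neq3[OF refl(1) F1(19)] neq3[OF refl(1) F2(19)] neq3[OF refl(1) F3(19)] neq1[OF refl(1) p12(7)] neq1[OF refl(1) p13(7)] neq1[OF refl(1) p23(7)] neq1[OF refl(1) nac] neq1[OF F1(1) ab(3), THEN not_sym] neq1[OF F2(1) ab(3), THEN not_sym] neq1[OF F3(1) ab(3), THEN not_sym] neq1[OF F1(2) ab(3), THEN not_sym] neq1[OF F2(2) ab(3), THEN not_sym] neq1[OF F3(2) ab(3), THEN not_sym] neq2[OF F2(4) P21(5)] neq2[OF F1(4) P12(5)] neq2[OF F1(4) P13(5)] neq1[OF refl(2) p12(8)] neq1[OF refl(2) p13(8)] neq1[OF refl(2) p23(8)] neq1[OF refl(2) nbc] neq1[OF refl(3) P12(1)] neq1[OF refl(3) P13(1)] neq3[OF F1(4) F1(18)] neq3[OF F1(4) F2(18)] neq3[OF F1(4) F3(18)] neq3[OF F1(1) F1(19)] neq3[OF F1(1) F2(19)] neq3[OF F1(1) F3(19)] neq1[OF F1(1) p12(7)] neq1[OF F1(1) p13(7)] neq1[OF F1(1) p23(7)] neq1[OF F1(1) nac] neq1[OF refl(4) P23(1)] neq3[OF F2(4) F1(18)] neq3[OF F2(4) F2(18)] neq3[OF F2(4) F3(18)] neq3[OF F2(1)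 F1(19)] neq3[OF F2(1) F2(19)] neq3[OF F2(1) F3(19)] neq1[OF F2(1) p12(7)] neq1[OF F2(1) p13(7)] neq1[OF F2(1) p23(7)] neq1[OF F2(1) nac] neq3[OF F3(4) F1(18)] neq3[OF F3(4) F2(18)] neq3[OF F3(4) F3(18)] neq3[OF F3(1) F1(19)] neq3[OF F3(1) F2(19)] neq3[OF F3(1) F3(19)] neq1[OF F3(1) p12(7)] neq1[OF F3(1) p13(7)] neq1[OF F3(1) p23(7)] neq1[OF F3(1) nac] neq1[OF F1(3) P12(3)] neq1[OF F1(3) P13(3)] neq3[OF F1(2) F1(19)] neq3[OF F1(2) F2(19)] neq3[OF F1(2) F3(19)] neq1[OF F1(2) p12(7)] neq1[OF F1(2) p13(7)] neq1[OF F1(2) p23(7)] neq1[OF F1(2) nac] neq1[OF F2(3) P23(3)] neq3[OF F2(2) F1(19)] neq3[OF F2(2) F2(19)] neq3[OF F2(2) F3(19)] neq1[OF F2(2) p12(7)] neq1[OF F2(2) p13(7)] neq1[OF F2(2) p23(7)] neq1[OF F2(2) nac] neq3[OF F3(2) F1(19)] neq3[OF F3(2) F2(19)] neq3[OF F3(2) F3(19)] neq1[OF F3(2) p12(7)] neq1[OF F3(2) p13(7)] neq1[OF F3(2) p23(7)] neq1[OF F3(2) nac] neq1[OF F1(6) P12(5)] neq1[OF F1(6) P13(5)] neq1[OF F1(5) p12(8)] neq1[OF F1(5) p13(8)] neq1[OF F1(5) p23(8)] neq1[OF F1(5) nbc] neq1[OF F2(6) P23(5)] neq1[OF F2(5)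 p12(8)] neq1[OF F2(5) p13(8)] neq1[OF F2(5) p23(8)] neq1[OF F2(5) nbc] neq1[OF F3(5) p12(8)] neq1[OF F3(5) p13(8)] neq1[OF F3(5) p23(8)] neq1[OF F3(5) nbc] neq1[OF e2p13 p12(10), THEN not_sym] neq1[OF e1p23 p12(9), THEN not_sym] neq1[OF ce1 p12(9), THEN not_sym] neq1[OF e1p23 p13(9), THEN not_sym] neq1[OF ce1 p13(9), THEN not_sym] neq2[OF ce2 p23(9), THEN not_sym]
    by simp
  show ?thesis
    apply (rule exI[of _ e1], rule exI[of _ e2], rule exI[of _ e3], rule exI[of _ f1], rule exI[of _ f2],
      rule exI[of _ f3], rule exI[of _ g1], rule exI[of _ g2], rule exI[of _ g3], rule exI[of _ p12],
      rule exI[of _ p13], rule exI[of _ p23], rule exI[of _ c])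
    using enum dist ab F1(13-15) F2(13-15) F3(13-15) p12(11) p13(11) p23(11) L1 L2 L3 p12(1,7,8) p13(1,7,8) p23(1,7,8) cp12 cp13 cp23 nac nbc cP F1(1,2,5) F2(1,2,5) F3(1,2,5)
      symp
    by simp
qed

lemma cardP: "card P = 15"
proof -
  obtain a where a: "a \<in> P" using Pne by blast
  obtain b where b: "b \<in> P" "\<not> coll a b" using nonfull[OF a] by blast
  obtain e1 e2 e3 f1 f2 f3 g1 g2 g3 p12 p13 p23 c where
    st: "\<forall>x\<in>P. x \<in> {a,b,e1,e2,e3,f1,f2,f3,g1,g2,g3,p12,p13,p23,c}"
    "distinct [a,b,e1,e2,e3,f1,f2,f3,g1,g2,g3,p12,p13,p23,c]"
    "{a,b,e1,e2,e3,f1,f2,f3,g1,g2,g3,p12,p13,p23,c} \<subseteq> P"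
    using gstruct[OF a b] by (elim exE conjE) (rule that, assumption+)
  have "P = set [a,b,e1,e2,e3,f1,f2,f3,g1,g2,g3,p12,p13,p23,c]" using st(1,3) by auto
  then show ?thesis using distinct_card[OF st(2)] by simp
qed

end


locale gqrep = gq P L for P :: "'p set" and L +
  fixes R :: "('a, 'b) monoid_scheme" and r :: "'p \<Rightarrow> 'a"
  assumes frep: "faithful_representation P L R r"
begin

lemma repD: "(group R \<and>
     (\<forall>x\<in>P. r x \<in> carrier R \<and> r x \<noteq> \<one>\<^bsub>R\<^esub> \<and> r x \<otimes>\<^bsub>R\<^esub> r x = \<one>\<^bsub>R\<^esub>) \<and>
     generate R (r ` P) = carrier R \<and>
     (\<forall>l\<in>L. \<forall>x y z. l = {x, y, z} \<longrightarrow>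
        klein_four_subgroup R {\<one>\<^bsub>R\<^esub>, r x, r y, r z})) \<and>
     inj_on (\<lambda>x. generate R {r x}) P"
  using frep unfolding faithful_representation_def representation_def .

lemma grp: "group R" using repD by (elim conjE)

sublocale G: group R by (rule grp)

lemma rP: "x \<in> P \<Longrightarrow> r x \<in> carrier R" "x \<in> P \<Longrightarrow> r x \<noteq> \<one>\<^bsub>R\<^esub>" "x \<in> P \<Longrightarrow> r x \<otimes>\<^bsub>R\<^esub> r x = \<one>\<^bsub>R\<^esub>"
proof -
  assume x: "x \<in> P"
  have "\<forall>x\<in>P. r x \<in> carrier R \<and> r x \<noteq> \<one>\<^bsub>R\<^esub> \<and> r x \<otimes>\<^bsub>R\<^esub> r x = \<one>\<^bsub>R\<^esub>" using repD by (elim conjE)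
  then have "r x \<in> carrier R \<and> r x \<noteq> \<one>\<^bsub>R\<^esub> \<and> r x \<otimes>\<^bsub>R\<^esub> r x = \<one>\<^bsub>R\<^esub>" using x by (rule bspec)
  then show "r x \<in> carrier R" "r x \<noteq> \<one>\<^bsub>R\<^esub>" "r x \<otimes>\<^bsub>R\<^esub> r x = \<one>\<^bsub>R\<^esub>" by simp_all
qed

lemma gen: "generate R (r ` P) = carrier R"
  using repD by (elim conjE)

lemma klein: "l \<in> L \<Longrightarrow> l = {x,y,z} \<Longrightarrow> klein_four_subgroup R {\<one>\<^bsub>R\<^esub>, r x, r y, r z}"
proof -
  assume "l \<in> L" "l = {x,y,z}"
  have "\<forall>l\<in>L. \<forall>x y z. l = {x, y, z} \<longrightarrow> klein_four_subgroup R {\<one>\<^bsub>R\<^esub>, r x, r y, r z}"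
    using repD by (elim conjE)
  then show ?thesis using \<open>l \<in> L\<close> \<open>l = {x,y,z}\<close> by simp
qed

lemma ginj: "inj_on (\<lambda>x. generate R {r x}) P"
  using repD by (elim conjE)

lemma rinj: "inj_on r P"
proof (rule inj_onI)
  fix x y assume "x \<in> P" "y \<in> P" "r x = r y"
  then show "x = y" using ginj unfolding inj_on_def by simp
qed

lemma rinj': "x \<in> P \<Longrightarrow> y \<in> P \<Longrightarrow> r x = r y \<Longrightarrow> x = y"
  using rinj unfolding inj_on_def by blast

lemma kl:
  assumes "l \<in> L" "x \<in> l" "y \<in> l" "z \<in> l" "x \<noteq> y" "y \<noteq> z" "x \<noteq> z"
  shows "r x \<otimes>\<^bsub>R\<^esub> r y = r z"
proof -
  have l: "l = {x,y,z}" using line_eq3 assms by blast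
  have P: "x \<in> P" "y \<in> P" "z \<in> P" using line_sub[OF assms(1)] assms by auto
  note rx = rP[OF P(1)] and ry = rP[OF P(2)] and rz = rP[OF P(3)]
  have K: "klein_four_subgroup R {\<one>\<^bsub>R\<^esub>, r x, r y, r z}" using klein[OF assms(1) l] .
  then have sg: "subgroup {\<one>\<^bsub>R\<^esub>, r x, r y, r z} R" and c4: "card {\<one>\<^bsub>R\<^esub>, r x, r y, r z} = 4"
    unfolding klein_four_subgroup_def by auto
  have d: "r x \<noteq> r y" "r y \<noteq> r z" "r x \<noteq> r z"
  proof -
    have c3: "card {u,v,w::'a} \<le> 3" for u v w by (simp add: card_insert_if)
    show "r x \<noteq> r y"
    proof
      assume e: "r x = r y"
      have "{\<one>\<^bsub>R\<^esub>, r x, r y, r z} = {\<one>\<^bsub>R\<^esub>, r y, r z}" using e by simp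
      then show False using c4 c3[of "\<one>\<^bsub>R\<^esub>" "r y" "r z"] by simp
    qed
    show "r y \<noteq> r z"
    proof
      assume e: "r y = r z"
      have "{\<one>\<^bsub>R\<^esub>, r x, r y, r z} = {\<one>\<^bsub>R\<^esub>, r x, r z}" using e by simp
      then show False using c4 c3[of "\<one>\<^bsub>R\<^esub>" "r x" "r z"] by simp
    qed
    show "r x \<noteq> r z"
    proof
      assume e: "r x = r z"
      have "{\<one>\<^bsub>R\<^esub>, r x, r y, r z} = {\<one>\<^bsub>R\<^esub>, r y, r z}" using e by auto
      then show False using c4 c3[of "\<one>\<^bsub>R\<^esub>" "r y" "r z"] by simp
    qed
  qed
  have "r x \<otimes>\<^bsub>R\<^esub> r y \<in> {\<one>\<^bsub>R\<^esub>, r x, r y, r z}"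
    using subgroup.m_closed[OF sg] by simp
  moreover have "r x \<otimes>\<^bsub>R\<^esub> r y \<noteq> \<one>\<^bsub>R\<^esub>"
  proof
    assume h: "r x \<otimes>\<^bsub>R\<^esub> r y = \<one>\<^bsub>R\<^esub>"
    have "r y = r x \<otimes>\<^bsub>R\<^esub> (r x \<otimes>\<^bsub>R\<^esub> r y)" using rx ry by (simp add: G.m_assoc[symmetric])
    then show False using h rx d by simp
  qed
  moreover have "r x \<otimes>\<^bsub>R\<^esub> r y \<noteq> r x" using rx ry by simp
  moreover have "r x \<otimes>\<^bsub>R\<^esub> r y \<noteq> r y" using rx ry by simp
  ultimately show ?thesis by blast
qed

lemma lcanc: "x \<in> carrier R \<Longrightarrow> y \<in> carrier R \<Longrightarrow> z \<in> carrier R \<Longrightarrow> x \<otimes>\<^bsub>R\<^esub> y = x \<otimes>\<^bsub>R\<^esub> z \<Longrightarrow> y = z"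
proof -
  assume a: "x \<in> carrier R" "y \<in> carrier R" "z \<in> carrier R" "x \<otimes>\<^bsub>R\<^esub> y = x \<otimes>\<^bsub>R\<^esub> z"
  have "y = inv\<^bsub>R\<^esub> x \<otimes>\<^bsub>R\<^esub> (x \<otimes>\<^bsub>R\<^esub> y)" using a by (simp add: G.m_assoc[symmetric])
  also have "\<dots> = inv\<^bsub>R\<^esub> x \<otimes>\<^bsub>R\<^esub> (x \<otimes>\<^bsub>R\<^esub> z)" using a by simp
  also have "\<dots> = z" using a by (simp add: G.m_assoc[symmetric])
  finally show ?thesis .
qed

lemma GL1:
  assumes "a \<in> P" "b \<in> P" "\<not> coll a b" "l \<in> L" "a \<in> l" "x \<in> l" "x \<noteq> a"
    and h: "r a \<otimes>\<^bsub>R\<^esub> r b = r x"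
  shows False
proof -
  obtain y where y: "l = {a,x,y}" "y \<noteq> a" "y \<noteq> x" using line_third[OF assms(4,5,6)] assms(7) by metis
  have yP: "y \<in> P" using line_sub[OF assms(4)] y by auto
  have "r a \<otimes>\<^bsub>R\<^esub> r x = r y" using kl[OF assms(4), of a x y] y assms by auto
  moreover have "r a \<otimes>\<^bsub>R\<^esub> r x = r b"
  proof -
    have "r a \<otimes>\<^bsub>R\<^esub> r x = r a \<otimes>\<^bsub>R\<^esub> (r a \<otimes>\<^bsub>R\<^esub> r b)" using h by simp
    also have "\<dots> = (r a \<otimes>\<^bsub>R\<^esub> r a) \<otimes>\<^bsub>R\<^esub> r b"
      using rP[OF assms(1)] rP[OF assms(2)] by (metis G.m_assoc)
    also have "\<dots> = r b" using rP[OF assms(1)] rP[OF assms(2)] by simp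
    finally show ?thesis .
  qed
  ultimately have "y = b" using rinj'[OF yP assms(2)] by simp
  then show False using coll_I[OF assms(4), of a b] y assms by simp
qed

lemma GL2:
  assumes "a \<in> P" "b \<in> P" "\<not> coll a b" "l \<in> L" "b \<in> l" "x \<in> l" "x \<noteq> b"
    and h: "r a \<otimes>\<^bsub>R\<^esub> r b = r x"
  shows False
proof -
  obtain y where y: "l = {b,x,y}" "y \<noteq> b" "y \<noteq> x" using line_third[OF assms(4,5,6)] assms(7) by metis
  have yP: "y \<in> P" using line_sub[OF assms(4)] y by auto
  have "r x \<otimes>\<^bsub>R\<^esub> r b = r y" using kl[OF assms(4), of x b y] y assms by auto
  moreover have "r x \<otimes>\<^bsub>R\<^esub> r b = r a"
  proof -
    have "r x \<otimes>\<^bsub>R\<^esub> r b = (r a \<otimes>\<^bsub>R\<^esub> r b) \<otimes>\<^bsub>R\<^esub> r b" using h by simp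
    also have "\<dots> = r a \<otimes>\<^bsub>R\<^esub> (r b \<otimes>\<^bsub>R\<^esub> r b)"
      using rP[OF assms(1)] rP[OF assms(2)] by (simp add: G.m_assoc)
    also have "\<dots> = r a" using rP[OF assms(1)] rP[OF assms(2)] by simp
    finally show ?thesis .
  qed
  ultimately have "y = a" using rinj'[OF yP assms(1)] by simp
  then show False using coll_I[OF assms(4), of a b] y assms by simp
qed

lemma GL3:
  assumes "{a,e,f} \<in> L" "{b,e',g'} \<in> L" "{f,g',p} \<in> L"
    "a \<noteq> e" "a \<noteq> f" "e \<noteq> f" "b \<noteq> e'" "b \<noteq> g'" "e' \<noteq> g'" "f \<noteq> g'" "f \<noteq> p" "g' \<noteq> p"
    "e \<noteq> e'"
    and h: "r a \<otimes>\<^bsub>R\<^esub> r b = r p"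
  shows False
proof -
  have P: "a \<in> P" "e \<in> P" "f \<in> P" "b \<in> P" "e' \<in> P" "g' \<in> P" "p \<in> P"
    using line_sub[OF assms(1)] line_sub[OF assms(2)] line_sub[OF assms(3)] by auto
  note C = rP(1)[OF P(1)] rP(1)[OF P(2)] rP(1)[OF P(3)] rP(1)[OF P(4)] rP(1)[OF P(5)] rP(1)[OF P(6)] rP(1)[OF P(7)]
  have 1: "r a \<otimes>\<^bsub>R\<^esub> r e = r f" using kl[OF assms(1), of a e f] assms by auto
  have 2: "r e' \<otimes>\<^bsub>R\<^esub> r b = r g'" using kl[OF assms(2), of e' b g'] assms by auto
  have 3: "r f \<otimes>\<^bsub>R\<^esub> r g' = r p" using kl[OF assms(3), of f g' p] assms by auto
  have "r p = (r a \<otimes>\<^bsub>R\<^esub> r e) \<otimes>\<^bsub>R\<^esub> (r e' \<otimes>\<^bsub>R\<^esub> r b)" using 1 2 3 by simp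
  also have "\<dots> = r a \<otimes>\<^bsub>R\<^esub> ((r e \<otimes>\<^bsub>R\<^esub> r e') \<otimes>\<^bsub>R\<^esub> r b)" using C by (simp add: G.m_assoc)
  finally have "r a \<otimes>\<^bsub>R\<^esub> r b = r a \<otimes>\<^bsub>R\<^esub> ((r e \<otimes>\<^bsub>R\<^esub> r e') \<otimes>\<^bsub>R\<^esub> r b)" using h by simp
  then have "r b = (r e \<otimes>\<^bsub>R\<^esub> r e') \<otimes>\<^bsub>R\<^esub> r b" using C lcanc by (meson G.m_closed)
  then have "\<one>\<^bsub>R\<^esub> \<otimes>\<^bsub>R\<^esub> r b = (r e \<otimes>\<^bsub>R\<^esub> r e') \<otimes>\<^bsub>R\<^esub> r b" using C by simp
  then have "\<one>\<^bsub>R\<^esub> = r e \<otimes>\<^bsub>R\<^esub> r e'" using C G.right_cancel by (meson G.m_closed G.one_closed)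
  then have "r e \<otimes>\<^bsub>R\<^esub> r e = r e \<otimes>\<^bsub>R\<^esub> r e'" using rP(3)[OF P(2)] by simp
  then have "r e = r e'" using C lcanc by meson
  then show False using rinj'[OF P(2) P(5)] assms by simp
qed

lemma gstructE:
  assumes "a \<in> P" "b \<in> P" "\<not> coll a b"
  obtains e1 e2 e3 f1 f2 f3 g1 g2 g3 p12 p13 p23 c where "(\<forall>x\<in>P. x \<in> {a,b,e1,e2,e3,f1,f2,f3,g1,g2,g3,p12,p13,p23,c})" "distinct [a,b,e1,e2,e3,f1,f2,f3,g1,g2,g3,p12,p13,p23,c]" "{a,b,e1,e2,e3,f1,f2,f3,g1,g2,g3,p12,p13,p23,c} \<subseteq> P" "{a,e1,f1} \<in> L" "{a,e2,f2} \<in> L" "{a,e3,f3} \<in> L" "{b,e1,g1} \<in> L" "{b,e2,g2} \<in> L" "{b,e3,g3} \<in> L" "{f1,g2,p12} \<in> L" "{f1,g3,p13} \<in> L" "{f2,g3,p23} \<in> L" "coll c p12" "coll c p13" "coll c p23" "\<not> coll a p12" "\<not> coll a p13" "\<not> coll a p23" "\<not> coll a c" "\<not> coll b p12" "\<not> coll b p13" "\<not> coll b p23" "\<not> coll b c" "\<not> coll p12 p13" "\<not> coll p12 p23" "\<not> coll p13 p23" "c \<in> P" "coll a e1" "coll a e2" "coll a e3" "coll a f1" "coll a f2" "coll a f3" "coll b g1" "coll b g2" "coll b g3"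
  using gstruct[OF assms] by (elim exE conjE) (rule that, assumption+)

lemma arcD: "is_arc P L A \<Longrightarrow> x \<in> A \<Longrightarrow> y \<in> A \<Longrightarrow> x \<noteq> y \<Longrightarrow> \<not> coll x y"
  unfolding is_arc_def by blast

lemma arcP: "is_arc P L A \<Longrightarrow> A \<subseteq> P"
  unfolding is_arc_def by blast

lemma card3D: "card {x,y,z} = 3 \<Longrightarrow> x \<noteq> y \<and> y \<noteq> z \<and> x \<noteq> z"
  by (cases "x = y"; cases "y = z"; cases "x = z") (auto simp: card_insert_if)

lemma arc4:
  assumes "{a,b,x,y} \<subseteq> P" "distinct [a,b,x,y]" "\<not> coll a b" "\<not> coll a x" "\<not> coll a y"
    "\<not> coll b x" "\<not> coll b y" "\<not> coll x y"
  shows "is_k_arc P L 4 {a,b,x,y}"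
  unfolding is_k_arc_def is_arc_def using assms coll_sym by auto

lemma complete_pair:
  assumes ab: "a \<in> P" "b \<in> P" "\<not> coll a b"
  shows "\<exists>c\<in>P. complete_k_arc P L 3 {a,b,c}"
proof -
  obtain e1 e2 e3 f1 f2 f3 g1 g2 g3 p12 p13 p23 c where st: "(\<forall>x\<in>P. x \<in> {a,b,e1,e2,e3,f1,f2,f3,g1,g2,g3,p12,p13,p23,c})" "distinct [a,b,e1,e2,e3,f1,f2,f3,g1,g2,g3,p12,p13,p23,c]" "{a,b,e1,e2,e3,f1,f2,f3,g1,g2,g3,p12,p13,p23,c} \<subseteq> P" "{a,e1,f1} \<in> L" "{a,e2,f2} \<in> L" "{a,e3,f3} \<in> L" "{b,e1,g1} \<in> L" "{b,e2,g2} \<in> L" "{b,e3,g3} \<in> L" "{f1,g2,p12} \<in> L" "{f1,g3,p13} \<in> L" "{f2,g3,p23} \<in> L" "coll c p12" "coll c p13" "coll c p23" "\<not> coll a p12" "\<not> coll a p13" "\<not> coll a p23" "\<not> coll a c" "\<not> coll b p12" "\<not> coll b p13" "\<not> coll b p23" "\<not> coll b c" "\<not> coll p12 p13" "\<not> coll p12 p23" "\<not> coll p13 p23" "c \<in> P" "coll a e1" "coll a e2" "coll a e3" "coll a f1" "coll a f2" "coll a f3" "coll b g1" "coll b g2" "coll b g3"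
    using gstructE[OF ab] by blast
  have arc: "is_k_arc P L 3 {a,b,c}"
    unfolding is_k_arc_def is_arc_def using st ab coll_sym by auto
  have "\<not> (\<exists>B. {a,b,c} \<subseteq> B \<and> is_k_arc P L (3 + 1) B)"
  proof
    assume "\<exists>B. {a,b,c} \<subseteq> B \<and> is_k_arc P L (3 + 1) B"
    then obtain B where B: "{a,b,c} \<subseteq> B" "is_k_arc P L 4 B" by auto
    have "B \<noteq> {a,b,c}" using B(2) arc unfolding is_k_arc_def by auto
    then obtain d where d: "d \<in> B" "d \<notin> {a,b,c}" using B(1) by blast
    have ar: "is_arc P L B" using B(2) unfolding is_k_arc_def by simp
    have dP: "d \<in> P" using arcP[OF ar] d by blast
    have n: "\<not> coll d a" "\<not> coll d b" "\<not> coll d c" using arcD[OF ar] d B(1) by auto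
    have "d \<in> {a,b,e1,e2,e3,f1,f2,f3,g1,g2,g3,p12,p13,p23,c}" using st(1) dP by blast
    then show False using d(2) n st coll_sym by auto
  qed
  then show ?thesis unfolding complete_k_arc_def using arc st by auto
qed

lemma card_S: "card (insert \<one>\<^bsub>R\<^esub> (r ` P)) = 16" "finite (insert \<one>\<^bsub>R\<^esub> (r ` P))"
    "insert \<one>\<^bsub>R\<^esub> (r ` P) \<subseteq> carrier R"
proof -
  have fP: "finite P" using cardP by (metis card.infinite zero_neq_numeral)
  have c: "card (r ` P) = 15" using card_image[OF rinj] cardP by simp
  have "\<one>\<^bsub>R\<^esub> \<notin> r ` P"
  proof
    assume "\<one>\<^bsub>R\<^esub> \<in> r ` P"
    then obtain x where "x \<in> P" "\<one>\<^bsub>R\<^esub> = r x" by blast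
    then show False using rP(2)[of x] by simp
  qed
  then show "card (insert \<one>\<^bsub>R\<^esub> (r ` P)) = 16" using c fP by simp
  show "finite (insert \<one>\<^bsub>R\<^esub> (r ` P))" using fP by simp
  show "insert \<one>\<^bsub>R\<^esub> (r ` P) \<subseteq> carrier R" using rP(1) by blast
qed

lemma dir1:
  assumes cs: "carrier R = insert \<one>\<^bsub>R\<^esub> (r ` P)" and comp: "complete_k_arc P L 3 {a,b,c}"
  shows "r a \<otimes>\<^bsub>R\<^esub> r b \<otimes>\<^bsub>R\<^esub> r c = \<one>\<^bsub>R\<^esub>"
proof -
  have k3: "is_k_arc P L 3 {a,b,c}" and nB: "\<not> (\<exists>B. {a,b,c} \<subseteq> B \<and> is_k_arc P L (3 + 1) B)"
    using comp unfolding complete_k_arc_def by auto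
  have ar: "is_arc P L {a,b,c}" and c3: "card {a,b,c} = 3" using k3 unfolding is_k_arc_def by auto
  have dd: "a \<noteq> b" "b \<noteq> c" "a \<noteq> c" using card3D[OF c3] by auto
  have abP: "a \<in> P" "b \<in> P" "c \<in> P" using arcP[OF ar] by auto
  have nc: "\<not> coll a b" "\<not> coll a c" "\<not> coll b c" using arcD[OF ar] dd by auto
  obtain e1 e2 e3 f1 f2 f3 g1 g2 g3 p12 p13 p23 c0 where st: "(\<forall>x\<in>P. x \<in> {a,b,e1,e2,e3,f1,f2,f3,g1,g2,g3,p12,p13,p23,c0})" "distinct [a,b,e1,e2,e3,f1,f2,f3,g1,g2,g3,p12,p13,p23,c0]" "{a,b,e1,e2,e3,f1,f2,f3,g1,g2,g3,p12,p13,p23,c0} \<subseteq> P" "{a,e1,f1} \<in> L" "{a,e2,f2} \<in> L" "{a,e3,f3} \<in> L" "{b,e1,g1} \<in> L" "{b,e2,g2} \<in> L" "{b,e3,g3} \<in> L" "{f1,g2,p12} \<in> L" "{f1,g3,p13} \<in> L" "{f2,g3,p23} \<in> L" "coll c0 p12" "coll c0 p13" "coll c0 p23" "\<not> coll a p12" "\<not> coll a p13" "\<not> coll a p23" "\<not> coll a c0" "\<not> coll b p12" "\<not> coll b p13" "\<not> coll b p23" "\<not> coll b c0" "\<not> coll p12 p13" "\<not> coll p12 p23" "\<not> coll p13 p23" "c0 \<in> P" "coll a e1" "coll a e2" "coll a e3" "coll a f1" "coll a f2" "coll a f3" "coll b g1" "coll b g2" "coll b g3"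
    using gstructE[OF abP(1,2) nc(1)] by blast
  have no4: False if "is_k_arc P L 4 B" "{a,b,c} \<subseteq> B" for B
    using nB that by auto
  have cc: "c = c0"
  proof -
    have "c \<in> {a,b,e1,e2,e3,f1,f2,f3,g1,g2,g3,p12,p13,p23,c0}" using st(1) abP by blast
    moreover have "c \<noteq> e1" "c \<noteq> e2" "c \<noteq> e3" "c \<noteq> f1" "c \<noteq> f2" "c \<noteq> f3"
      using nc st by auto
    moreover have "c \<noteq> g1" "c \<noteq> g2" "c \<noteq> g3" using nc st by auto
    moreover have "c \<noteq> p12"
    proof
      assume "c = p12"
      then show False using no4[of "{a,b,p12,p13}"] arc4[of a b p12 p13] st nc by auto
    qed
    moreover have "c \<noteq> p13"
    proof
      assume "c = p13"
      then show False using no4[of "{a,b,p13,p12}"] arc4[of a b p13 p12] st nc coll_sym by auto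
    qed
    moreover have "c \<noteq> p23"
    proof
      assume "c = p23"
      then show False using no4[of "{a,b,p23,p12}"] arc4[of a b p23 p12] st nc coll_sym by auto
    qed
    ultimately show ?thesis using dd by blast
  qed
  note ra = rP[OF abP(1)] and rb = rP[OF abP(2)]
  have "r a \<otimes>\<^bsub>R\<^esub> r b \<in> carrier R" using ra rb by simp
  then have "r a \<otimes>\<^bsub>R\<^esub> r b = \<one>\<^bsub>R\<^esub> \<or> (\<exists>x\<in>P. r a \<otimes>\<^bsub>R\<^esub> r b = r x)" using cs by auto
  then show ?thesis
  proof
    assume h: "r a \<otimes>\<^bsub>R\<^esub> r b = \<one>\<^bsub>R\<^esub>"
    then have "r a \<otimes>\<^bsub>R\<^esub> r b = r a \<otimes>\<^bsub>R\<^esub> r a" using ra by simp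
    then have "r b = r a" using lcanc ra rb by blast
    then show ?thesis using rinj'[OF abP(2,1)] dd by simp
  next
    assume "\<exists>x\<in>P. r a \<otimes>\<^bsub>R\<^esub> r b = r x"
    then obtain x where x: "x \<in> P" "r a \<otimes>\<^bsub>R\<^esub> r b = r x" by blast
    have "x \<in> {a,b,e1,e2,e3,f1,f2,f3,g1,g2,g3,p12,p13,p23,c0}" using st(1) x by blast
    moreover have "x \<noteq> a"
    proof
      assume "x = a"
      then have "r a \<otimes>\<^bsub>R\<^esub> r b = r a \<otimes>\<^bsub>R\<^esub> \<one>\<^bsub>R\<^esub>" using x ra by simp
      then have "r b = \<one>\<^bsub>R\<^esub>" using lcanc ra rb by blast
      then show False using rb by simp
    qed
    moreover have "x \<noteq> b"
    proof
      assume "x = b"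
      then have "r a \<otimes>\<^bsub>R\<^esub> r b = \<one>\<^bsub>R\<^esub> \<otimes>\<^bsub>R\<^esub> r b" using x rb by simp
      then have "r a = \<one>\<^bsub>R\<^esub>" using G.right_cancel ra rb by (metis G.one_closed)
      then show False using ra by simp
    qed
    moreover have "x \<noteq> e1" "x \<noteq> f1"
      using GL1[OF abP(1,2) nc(1) st(4), of x] x st(2) by auto
    moreover have "x \<noteq> e2" "x \<noteq> f2"
      using GL1[OF abP(1,2) nc(1) st(5), of x] x st(2) by auto
    moreover have "x \<noteq> e3" "x \<noteq> f3"
      using GL1[OF abP(1,2) nc(1) st(6), of x] x st(2) by auto
    moreover have "x \<noteq> g1" using GL2[OF abP(1,2) nc(1) st(7), of x] x st(2) by auto
    moreover have "x \<noteq> g2" using GL2[OF abP(1,2) nc(1) st(8), of x] x st(2) by auto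
    moreover have "x \<noteq> g3" using GL2[OF abP(1,2) nc(1) st(9), of x] x st(2) by auto
    moreover have "x \<noteq> p12" using GL3[OF st(4) st(8) st(10)] x st(2) by auto
    moreover have "x \<noteq> p13" using GL3[OF st(4) st(9) st(11)] x st(2) by auto
    moreover have "x \<noteq> p23" using GL3[OF st(5) st(9) st(12)] x st(2) by auto
    ultimately have "x = c0" by blast
    then show ?thesis using x cc rP(3)[OF abP(3)] by simp
  qed
qed

lemma dir2:
  assumes H: "\<forall>a b c. complete_k_arc P L 3 {a, b, c} \<longrightarrow> r a \<otimes>\<^bsub>R\<^esub> r b \<otimes>\<^bsub>R\<^esub> r c = \<one>\<^bsub>R\<^esub>"
  shows "carrier R = insert \<one>\<^bsub>R\<^esub> (r ` P)"
proof -
  let ?S = "insert \<one>\<^bsub>R\<^esub> (r ` P)"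
  have prod: "r x \<otimes>\<^bsub>R\<^esub> r y \<in> ?S" if xy: "x \<in> P" "y \<in> P" for x y
  proof (cases "x = y")
    case True
    then show ?thesis using rP(3)[OF xy(1)] by simp
  next
    case ne: False
    show ?thesis
    proof (cases "coll x y")
      case True
      obtain l where l: "l \<in> L" "x \<in> l" "y \<in> l" using True by (rule coll_E)
      obtain z where z: "l = {x,y,z}" "z \<noteq> x" "z \<noteq> y" using line_third[OF l ne] by blast
      have "r x \<otimes>\<^bsub>R\<^esub> r y = r z" using kl[OF l(1), of x y z] z ne by auto
      moreover have "z \<in> P" using line_sub[OF l(1)] z by auto
      ultimately show ?thesis by simp
    next
      case False
      obtain c where c: "c \<in> P" "complete_k_arc P L 3 {x,y,c}" using complete_pair[OF xy False] by blast
      have "(r x \<otimes>\<^bsub>R\<^esub> r y) \<otimes>\<^bsub>R\<^esub> r c = \<one>\<^bsub>R\<^esub>" using H c(2) by blast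
      then have "inv\<^bsub>R\<^esub> (r c) = r x \<otimes>\<^bsub>R\<^esub> r y"
        using G.inv_equality rP(1) xy c(1) G.m_closed by blast
      moreover have "inv\<^bsub>R\<^esub> (r c) = r c" using G.inv_equality[OF rP(3)[OF c(1)] rP(1)[OF c(1)] rP(1)[OF c(1)]] .
      ultimately have "r x \<otimes>\<^bsub>R\<^esub> r y = r c" by simp
      then show ?thesis using c(1) by blast
    qed
  qed
  have sg: "subgroup ?S R"
  proof (rule G.subgroupI)
    show "?S \<subseteq> carrier R" using card_S(3) .
    show "?S \<noteq> {}" by simp
    show "inv\<^bsub>R\<^esub> g \<in> ?S" if "g \<in> ?S" for g
    proof -
      from that consider "g = \<one>\<^bsub>R\<^esub>" | x where "x \<in> P" "g = r x" by blast
      then show ?thesis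
      proof cases
        case 1 then show ?thesis by simp
      next
        case 2
        then have "inv\<^bsub>R\<^esub> g = g" using G.inv_equality[OF rP(3) rP(1) rP(1)] by simp
        then show ?thesis using that by simp
      qed
    qed
    show "g \<otimes>\<^bsub>R\<^esub> h \<in> ?S" if "g \<in> ?S" "h \<in> ?S" for g h
    proof -
      from that(1) consider "g = \<one>\<^bsub>R\<^esub>" | x where "x \<in> P" "g = r x" by blast
      then show ?thesis
      proof cases
        case 1 then show ?thesis using that(2) card_S(3) by auto
      next
        case g: 2
        from that(2) consider "h = \<one>\<^bsub>R\<^esub>" | y where "y \<in> P" "h = r y" by blast
        then show ?thesis
        proof cases
          case 1 then show ?thesis using that(1) card_S(3) by auto
        next
          case 2 then show ?thesis using g prod by simp
        qed
      qed
    qed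
  qed
  have "generate R (r ` P) \<subseteq> ?S" using G.generate_subgroup_incl[OF _ sg] by blast
  then show ?thesis using gen card_S(3) by blast
qed

end

theorem proposition3p5:
  fixes P :: "'p set" and L :: "'p set set"
    and R :: "('a, 'b) monoid_scheme" and r :: "'p \<Rightarrow> 'a"
  assumes "GQ2 2 P L"
    and "faithful_representation P L R r"
  shows "order R = 2 ^ 4 \<longleftrightarrow>
         (\<forall>a b c. complete_k_arc P L 3 {a, b, c} \<longrightarrow> r a \<otimes>\<^bsub>R\<^esub> r b \<otimes>\<^bsub>R\<^esub> r c = \<one>\<^bsub>R\<^esub>)"
proof -
  interpret gqrep P L R r
    using assms by (simp add: gqrep_def gqrep_axioms_def gq_def)
  show ?thesis
  proof
    assume "order R = 2 ^ 4"
    then have c16: "card (carrier R) = 16" unfolding order_def by simp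
    then have fin: "finite (carrier R)" by (metis card.infinite zero_neq_numeral)
    have "insert \<one>\<^bsub>R\<^esub> (r ` P) = carrier R"
      using card_subset_eq[OF fin card_S(3)] card_S(1) c16 by simp
    then show "\<forall>a b c. complete_k_arc P L 3 {a, b, c} \<longrightarrow> r a \<otimes>\<^bsub>R\<^esub> r b \<otimes>\<^bsub>R\<^esub> r c = \<one>\<^bsub>R\<^esub>"
      using dir1 by metis
  next
    assume H: "\<forall>a b c. complete_k_arc P L 3 {a, b, c} \<longrightarrow> r a \<otimes>\<^bsub>R\<^esub> r b \<otimes>\<^bsub>R\<^esub> r c = \<one>\<^bsub>R\<^esub>"
    have "carrier R = insert \<one>\<^bsub>R\<^esub> (r ` P)" using dir2[OF H] .
    then show "order R = 2 ^ 4" unfolding order_def using card_S(1) by simp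
  qed
qed

end
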